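(* Let $F$ be a field and let $f=\sum_{\sigma\in S_d}\lambda_\sigma x_{\sigma(1)}\cdots x_{\sigma(d)}\in F\langle X\rangle$ be a multilinear polynomial of degree $d\ge 2$ with $\sum_{\sigma\in S_d}\lambda_\sigma\neq 0$. Let $\mathcal A$ be a unital $F$-algebra and let $\phi:\mathcal A\to\mathcal A$ be a linear map that preserves zeros of $f$ and satisfies $\phi(1)\in F^*\cdot 1$. If $a,b\in\mathcal A$ satisfy $ab=ba=0$, then $\phi(a)\phi(b)+\phi(b)\phi(a)=0$.
   Context: $F\langle X\rangle$ is the free algebra over $F$ in noncommuting indeterminates $x_1,x_2,\ldots$. A map $\phi$ on an $F$-algebra $\mathcal A$ preserves zeros of $f$ if for all $a_1,\ldots,a_d\in\mathcal A$, $f(a_1,\ldots,a_d)=0$ implies $f(\phi(a_1),\ldots,\phi(a_d))=0$. *)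

theory Defs
  imports "HOL-Combinatorics.Permutations"
begin

definition unital_algebra :: "('f::field \<Rightarrow> 'a::ring_1 \<Rightarrow> 'a) \<Rightarrow> bool" where
  "unital_algebra smul \<longleftrightarrow>
     (\<forall>c x y. smul c (x + y) = smul c x + smul c y) \<and>
     (\<forall>c e x. smul (c + e) x = smul c x + smul e x) \<and>
     (\<forall>c e x. smul c (smul e x) = smul (c * e) x) \<and>
     (\<forall>x. smul 1 x = x) \<and>
     (\<forall>c x y. smul c (x * y) = smul c x * y) \<and>
     (\<forall>c x y. smul c (x * y) = x * smul c y)"

definition linear_map :: "('f::field \<Rightarrow> 'a::ring_1 \<Rightarrow> 'a) \<Rightarrow> ('a \<Rightarrow> 'a) \<Rightarrow> bool" where
  "linear_map smul \<phi> \<longleftrightarrow>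
     (\<forall>x y. \<phi> (x + y) = \<phi> x + \<phi> y) \<and> (\<forall>c x. \<phi> (smul c x) = smul c (\<phi> x))"

text \<open>Evaluation of the multilinear polynomial
 f = sum over sigma in S_d of lam sigma * x_{sigma(0)} ... x_{sigma(d-1)}
 (variables indexed 0..d-1) at the tuple a(0),...,a(d-1).\<close>
definition mlin_eval ::
  "('f::field \<Rightarrow> 'a::ring_1 \<Rightarrow> 'a) \<Rightarrow> nat \<Rightarrow> ((nat \<Rightarrow> nat) \<Rightarrow> 'f) \<Rightarrow> (nat \<Rightarrow> 'a) \<Rightarrow> 'a" where
  "mlin_eval smul d lam a =
     (\<Sum>\<sigma>\<in>{\<sigma>. \<sigma> permutes {..<d}}. smul (lam \<sigma>) (prod_list (map (\<lambda>i. a (\<sigma> i)) [0..<d])))"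

definition preserves_zeros ::
  "('f::field \<Rightarrow> 'a::ring_1 \<Rightarrow> 'a) \<Rightarrow> nat \<Rightarrow> ((nat \<Rightarrow> nat) \<Rightarrow> 'f) \<Rightarrow> ('a \<Rightarrow> 'a) \<Rightarrow> bool" where
  "preserves_zeros smul d lam \<phi> \<longleftrightarrow>
     (\<forall>a. mlin_eval smul d lam a = 0 \<longrightarrow> mlin_eval smul d lam (\<lambda>i. \<phi> (a i)) = 0)"

end

theory Submission
  imports Defs
begin

lemma ua_facts:
  assumes "unital_algebra smul"
  shows "\<And>c z. smul c 1 * z = smul c z"
    and "\<And>e z w. z * smul e w = smul e (z * w)"
    and "\<And>e z w. smul e z * w = smul e (z * w)"
    and "\<And>z. smul 0 z = 0"
    and "\<And>c. smul c 0 = 0"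
    and "\<And>c e z. smul c (smul e z) = smul (c * e) z"
    and "\<And>z. smul 1 z = z"
    and "\<And>c e z. smul (c + e) z = smul c z + smul e z"
    and "\<And>c z w. smul c (z + w) = smul c z + smul c w"
proof -
  note u = assms[unfolded unital_algebra_def]
  show "\<And>c z. smul c 1 * z = smul c z" by (metis u mult_1_left)
  show "\<And>e z w. z * smul e w = smul e (z * w)" by (metis u)
  show "\<And>e z w. smul e z * w = smul e (z * w)" by (metis u)
  show "\<And>z. smul 0 z = 0" by (metis u add_cancel_right_right add_0)
  show "\<And>c. smul c 0 = 0" by (metis u add_cancel_right_right add_0)
  show "\<And>c e z. smul c (smul e z) = smul (c * e) z" using u by auto
  show "\<And>z. smul 1 z = z" using u by auto
  show "\<And>c e z. smul (c + e) z = smul c z + smul e z" using u by auto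
  show "\<And>c z w. smul c (z + w) = smul c z + smul c w" using u by auto
qed

lemma smul_sum_left:
  assumes "unital_algebra smul" "finite A"
  shows "smul (\<Sum>x\<in>A. g x) z = (\<Sum>x\<in>A. smul (g x) z)"
  using assms(2) by (induction A rule: finite_induct) (auto simp: ua_facts[OF assms(1)])

lemma smul_sum_right:
  assumes "unital_algebra smul" "finite A"
  shows "smul c (\<Sum>x\<in>A. g x) = (\<Sum>x\<in>A. smul c (g x))"
  using assms(2) by (induction A rule: finite_induct) (auto simp: ua_facts[OF assms(1)])

lemma prod_G:
  assumes "unital_algebra smul"
    and "\<And>k. k \<notin> S \<Longrightarrow> h k = smul c 1"
  shows "prod_list (map h xs) = smul (c ^ length (filter (\<lambda>k. k \<notin> S) xs))
            (prod_list (map h (filter (\<lambda>k. k \<in> S) xs)))"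
proof (induction xs)
  case Nil
  then show ?case by (simp add: ua_facts[OF assms(1)])
next
  case (Cons k xs)
  show ?case
  proof (cases "k \<in> S")
    case True
    then show ?thesis using Cons by (simp add: ua_facts[OF assms(1)])
  next
    case False
    then show ?thesis using Cons assms(2)[OF False] by (simp add: ua_facts[OF assms(1)] mult.commute)
  qed
qed

lemma key:
  assumes ua: "unital_algebra smul" and d: "d \<ge> 2"
  shows "mlin_eval smul d lam (\<lambda>k. if k = 0 then x else if k = 1 then y else smul c 1) =
     smul (c ^ (d - 2)) (smul (\<Sum>\<sigma>\<in>{\<sigma>. \<sigma> permutes {..<d} \<and> inv \<sigma> 0 < inv \<sigma> 1}. lam \<sigma>) (x * y)
        + smul (\<Sum>\<sigma>\<in>{\<sigma>. \<sigma> permutes {..<d} \<and> \<not> inv \<sigma> 0 < inv \<sigma> 1}. lam \<sigma>) (y * x))"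
proof -
  define T where "T = (\<lambda>k::nat. if k = 0 then x else if k = 1 then y else smul c 1)"
  let ?P = "{\<sigma>. \<sigma> permutes {..<d}}"
  have fin: "finite ?P" by (simp add: finite_permutations)
  have each: "prod_list (map (\<lambda>i. T (\<sigma> i)) [0..<d]) =
      smul (c ^ (d - 2)) (if inv \<sigma> 0 < inv \<sigma> 1 then x * y else y * x)"
    if sp: "\<sigma> permutes {..<d}" for \<sigma>
  proof -
    define i where "i = inv \<sigma> 0"
    define j where "j = inv \<sigma> 1"
    have si: "\<sigma> i = 0" "\<sigma> j = 1" unfolding i_def j_def using permutes_inverses(1)[OF sp] by auto
    have id: "i < d" "j < d" unfolding i_def j_def
      using permutes_in_image[OF permutes_inv[OF sp]] d by auto
    have ij: "i \<noteq> j" using si by auto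
    have inj: "inj \<sigma>" using permutes_inj[OF sp] .
    have oth: "(\<lambda>k. T (\<sigma> k)) k = smul c 1" if "k \<notin> {i, j}" for k
    proof -
      have "\<sigma> k \<noteq> 0" using that si inj by (metis injD insertCI)
      moreover have "\<sigma> k \<noteq> 1" using that si inj by (metis injD insertCI)
      ultimately show ?thesis by (simp add: T_def)
    qed
    note G = prod_G[OF ua, where S="{i, j}" and h="\<lambda>k. T (\<sigma> k)" and c=c and xs="[0..<d]", OF oth]
    have len: "length (filter (\<lambda>k. k \<notin> {i, j}) [0..<d]) = d - 2"
    proof -
      have "length (filter (\<lambda>k. k \<in> {i, j}) [0..<d]) = 2"
      proof -
        have "length (filter (\<lambda>k. k \<in> {i, j}) [0..<d]) = card (set (filter (\<lambda>k. k \<in> {i, j}) [0..<d]))"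
          by (metis distinct_card distinct_filter distinct_upt)
        also have "set (filter (\<lambda>k. k \<in> {i, j}) [0..<d]) = {i, j}" using id by auto
        finally show ?thesis using ij by simp
      qed
      moreover have "length (filter (\<lambda>k. k \<in> {i, j}) [0..<d]) + length (filter (\<lambda>k. \<not> k \<in> {i, j}) [0..<d]) = d"
        by (metis sum_length_filter_compl length_upt minus_nat.diff_0)
      ultimately show ?thesis by simp
    qed
    have filt: "filter (\<lambda>k. k \<in> {i, j}) [0..<d] = (if i < j then [i, j] else [j, i])"
    proof (rule sorted_distinct_set_unique)
      show "sorted (filter (\<lambda>k. k \<in> {i, j}) [0..<d])" using sorted_upt sorted_wrt_filter by blast
      show "distinct (filter (\<lambda>k. k \<in> {i, j}) [0..<d])" by simp
      show "sorted (if i < j then [i, j] else [j, i])" using ij by auto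
      show "distinct (if i < j then [i, j] else [j, i])" using ij by auto
      show "set (filter (\<lambda>k. k \<in> {i, j}) [0..<d]) = set (if i < j then [i, j] else [j, i])"
        using id by auto
    qed
    have E: "prod_list (map (\<lambda>k. T (\<sigma> k)) [0..<d]) = smul (c ^ (d - 2)) (prod_list (map (\<lambda>k. T (\<sigma> k)) (if i < j then [i, j] else [j, i])))"
      using G unfolding len filt .
    show ?thesis unfolding E using si using j_def by (auto simp: T_def i_def[symmetric])
  qed
  have "mlin_eval smul d lam (\<lambda>k. if k = 0 then x else if k = 1 then y else smul c 1) = (\<Sum>\<sigma>\<in>?P. smul (lam \<sigma>) (smul (c ^ (d - 2)) (if inv \<sigma> 0 < inv \<sigma> 1 then x * y else y * x)))"
    unfolding mlin_eval_def T_def[symmetric] by (rule sum.cong) (auto simp: each)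
  also have "\<dots> = smul (c ^ (d - 2)) (\<Sum>\<sigma>\<in>?P. (if inv \<sigma> 0 < inv \<sigma> 1 then smul (lam \<sigma>) (x * y) else smul (lam \<sigma>) (y * x)))"
  proof -
    have sw: "\<And>p q z. smul p (smul q z) = smul q (smul p z)" by (metis ua_facts(6)[OF ua] mult.commute)
    show ?thesis unfolding smul_sum_right[OF ua fin] by (rule sum.cong) (auto simp: sw[of "lam _"])
  qed
  also have "(\<Sum>\<sigma>\<in>?P. (if inv \<sigma> 0 < inv \<sigma> 1 then smul (lam \<sigma>) (x * y) else smul (lam \<sigma>) (y * x)))
     = (\<Sum>\<sigma>\<in>{\<sigma>. \<sigma> permutes {..<d} \<and> inv \<sigma> 0 < inv \<sigma> 1}. smul (lam \<sigma>) (x * y))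
       + (\<Sum>\<sigma>\<in>{\<sigma>. \<sigma> permutes {..<d} \<and> \<not> inv \<sigma> 0 < inv \<sigma> 1}. smul (lam \<sigma>) (y * x))"
    using fin by (simp add: sum.If_cases Int_def conj_commute)
  also have "\<dots> = smul (\<Sum>\<sigma>\<in>{\<sigma>. \<sigma> permutes {..<d} \<and> inv \<sigma> 0 < inv \<sigma> 1}. lam \<sigma>) (x * y)
        + smul (\<Sum>\<sigma>\<in>{\<sigma>. \<sigma> permutes {..<d} \<and> \<not> inv \<sigma> 0 < inv \<sigma> 1}. lam \<sigma>) (y * x)"
    using fin by (simp add: smul_sum_left[OF ua])
  finally show ?thesis .
qed

theorem lemma3p1:
  fixes smul :: "'f::field \<Rightarrow> 'a::ring_1 \<Rightarrow> 'a"
    and d :: nat and lam :: "(nat \<Rightarrow> nat) \<Rightarrow> 'f" and \<phi> :: "'a \<Rightarrow> 'a"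
    and a b :: 'a
  assumes "unital_algebra smul"
    and "d \<ge> 2"
    and "(\<Sum>\<sigma>\<in>{\<sigma>. \<sigma> permutes {..<d}}. lam \<sigma>) \<noteq> 0"
    and "linear_map smul \<phi>"
    and "preserves_zeros smul d lam \<phi>"
    and "\<exists>c. c \<noteq> 0 \<and> \<phi> 1 = smul c 1"
    and "a * b = 0" and "b * a = 0"
  shows "\<phi> a * \<phi> b + \<phi> b * \<phi> a = 0"
proof -
  note ua = assms(1)
  obtain c where c: "c \<noteq> 0" "\<phi> 1 = smul c 1" using assms(6) by blast
  define A where "A = {\<sigma>. \<sigma> permutes {..<d} \<and> inv \<sigma> 0 < inv \<sigma> 1}"
  define B where "B = {\<sigma>. \<sigma> permutes {..<d} \<and> \<not> inv \<sigma> 0 < inv \<sigma> 1}"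
  define \<alpha> where "\<alpha> = (\<Sum>\<sigma>\<in>A. lam \<sigma>)"
  define \<beta> where "\<beta> = (\<Sum>\<sigma>\<in>B. lam \<sigma>)"
  have fin: "finite {\<sigma>. \<sigma> permutes {..<d}}" by (simp add: finite_permutations)
  have ab: "\<alpha> + \<beta> = (\<Sum>\<sigma>\<in>{\<sigma>. \<sigma> permutes {..<d}}. lam \<sigma>)"
  proof -
    have "(\<Sum>\<sigma>\<in>{\<sigma>. \<sigma> permutes {..<d}}. lam \<sigma>) =
       (\<Sum>\<sigma>\<in>{\<sigma>. \<sigma> permutes {..<d}}. if inv \<sigma> 0 < inv \<sigma> 1 then lam \<sigma> else lam \<sigma>)" by simp
    also have "\<dots> = \<alpha> + \<beta>" using fin
      unfolding \<alpha>_def \<beta>_def A_def B_def by (simp only: sum.If_cases) (simp add: Int_def conj_commute)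
    finally show ?thesis by simp
  qed
  have lin: "\<And>x y. \<phi> (x + y) = \<phi> x + \<phi> y" "\<And>e x. \<phi> (smul e x) = smul e (\<phi> x)"
    using assms(4) unfolding linear_map_def by auto
  have main: "smul \<alpha> (\<phi> x * \<phi> y) + smul \<beta> (\<phi> y * \<phi> x) = 0"
    if xy: "x * y = 0" "y * x = 0" for x y
  proof -
    define T where "T = (\<lambda>k::nat. if k = 0 then x else if k = 1 then y else smul (1::'f) 1)"
    have "mlin_eval smul d lam T = 0"
      unfolding T_def key[OF ua assms(2)] A_def[symmetric] B_def[symmetric] \<alpha>_def[symmetric] \<beta>_def[symmetric]
      using xy by (simp add: ua_facts[OF ua])
    hence z: "mlin_eval smul d lam (\<lambda>i. \<phi> (T i)) = 0" using assms(5) unfolding preserves_zeros_def by blast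
    have "(\<lambda>i. \<phi> (T i)) = (\<lambda>k. if k = 0 then \<phi> x else if k = 1 then \<phi> y else smul c 1)"
      unfolding T_def using c(2) by (auto simp: ua_facts[OF ua])
    with z have "smul (c ^ (d - 2)) (smul \<alpha> (\<phi> x * \<phi> y) + smul \<beta> (\<phi> y * \<phi> x)) = 0"
      using key[OF ua assms(2), where x="\<phi> x" and y="\<phi> y" and c=c and lam=lam]
      unfolding A_def[symmetric] B_def[symmetric] \<alpha>_def[symmetric] \<beta>_def[symmetric] by simp
    hence "smul (inverse (c ^ (d - 2))) (smul (c ^ (d - 2)) (smul \<alpha> (\<phi> x * \<phi> y) + smul \<beta> (\<phi> y * \<phi> x))) = 0"
      by (simp add: ua_facts[OF ua])
    hence "smul (inverse (c ^ (d - 2)) * c ^ (d - 2)) (smul \<alpha> (\<phi> x * \<phi> y) + smul \<beta> (\<phi> y * \<phi> x)) = 0"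
      by (simp only: ua_facts(6)[OF ua])
    moreover have "inverse (c ^ (d - 2)) * c ^ (d - 2) = 1" using c(1) by simp
    ultimately show ?thesis by (simp only: ua_facts(7)[OF ua])
  qed
  have 1: "smul \<alpha> (\<phi> a * \<phi> b) + smul \<beta> (\<phi> b * \<phi> a) = 0" using main assms(7,8) by blast
  have 2: "smul \<alpha> (\<phi> b * \<phi> a) + smul \<beta> (\<phi> a * \<phi> b) = 0" using main assms(7,8) by blast
  have "smul (\<alpha> + \<beta>) (\<phi> a * \<phi> b + \<phi> b * \<phi> a) = 0"
  proof -
    have "smul (\<alpha> + \<beta>) (\<phi> a * \<phi> b + \<phi> b * \<phi> a) =
      (smul \<alpha> (\<phi> a * \<phi> b) + smul \<beta> (\<phi> b * \<phi> a)) + (smul \<alpha> (\<phi> b * \<phi> a) + smul \<beta> (\<phi> a * \<phi> b))"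
      by (simp add: ua_facts[OF ua] algebra_simps)
    thus ?thesis using 1 2 by simp
  qed
  hence "smul (inverse (\<alpha> + \<beta>)) (smul (\<alpha> + \<beta>) (\<phi> a * \<phi> b + \<phi> b * \<phi> a)) = 0"
    by (simp add: ua_facts[OF ua])
  hence "smul (inverse (\<alpha> + \<beta>) * (\<alpha> + \<beta>)) (\<phi> a * \<phi> b + \<phi> b * \<phi> a) = 0"
    by (simp only: ua_facts(6)[OF ua])
  moreover have "inverse (\<alpha> + \<beta>) * (\<alpha> + \<beta>) = 1" using assms(3) ab by simp
  ultimately show ?thesis by (simp only: ua_facts(7)[OF ua])
qed

end
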